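(* For every time $t\in\{0,1,\dots,T-1\}$, every risk-aversion vector $\beta$, and every spot price $p\in\mathbb R$: (i) for every $r\in\mathcal R$, the map $x\mapsto xp+\tilde V_{t,T}(r+x,p\,|\,\beta)$ is convex on $\mathcal X(r)$; (ii) the map $r\mapsto \tilde V_{t,T}(r,p\,|\,\beta)$ is convex on $\mathcal R$; (iii) the map $r\mapsto V_{t,T}(r,p\,|\,\beta)$ is convex on $\mathcal R$. Moreover, $r\mapsto V_{T,T}(r,p\,|\,\beta)$ is convex on $\mathcal R$.
   Context: Model (dynamic EV charging). Fix a horizon $T\in\{1,2,\dots\}$, a battery capacity $R_{\max}>0$, a maximal charge per period $x_{\max}>0$, an initial charge $R_0\in[0,R_{\max}]$, an access fee $c_f\in\mathbb R$, a reference price $p_{\mathrm{ref}}>0$, a constant $\gamma_h\ge 0$, a deterministic seasonality function $g:\mathbb R\to\mathbb R$, and price parameters $\kappa_Y>0$, $\mu_Y\in\mathbb R$, $\sigma_Y>0$, $\lambda_J\in(0,1)$, $\mu_J\in\mathbb R$, $\sigma_J>0$. Spot prices are $P_t=g(t)+Y_t$ with $Y_{t+1}=Y_te^{-\kappa_Y}+\mu_Y(1-e^{-\kappa_Y})+\xi_{t+1}+X_{t+1}J_{t+1}$, where $(\xi_t)$ are i.i.d. $\mathcal N\big(0,\sigma_Y^2(1-e^{-2\kappa_Y})/(2\kappa_Y)\big)$, $(X_t)$ are i.i.d. Bernoulli$(\lambda_J)$, $(J_t)$ are i.i.d. $\mathcal N(\mu_J,\sigma_J^2)$, all mutually independent.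 Define $\psi_{t+1}=g(t+1)-g(t)e^{-\kappa_Y}+\mu_Y(1-e^{-\kappa_Y})+\xi_{t+1}+X_{t+1}J_{t+1}$ and $\psi_{t+1,Y}=\psi_{t+1}-g(t+1)$ (so given $P_t=p$, $P_{t+1}$ has the law of $pe^{-\kappa_Y}+\psi_{t+1}$ and $Y_{t+1}$ that of $pe^{-\kappa_Y}+\psi_{t+1,Y}$). Let $\mathcal R=[0,R_{\max}]$, $\mathcal X(r)=[0,\min\{R_{\max}-r,x_{\max}\}]$, and shortage $h(r)=\min\{R_0+Tx_{\max},R_{\max}\}-r$. Let $\gamma_Y:\mathbb R\to(0,\infty)$ be a compensation function. Risk measures. For $\alpha\in(0,1)$: $\mathrm{VaR}_\alpha(X)=\inf\{u:\mathbf P(X\le u)>\alpha\}$, $\mathrm{CVaR}_\alpha(X)=\inf_u\{u+(1-\alpha)^{-1}\mathbf E[(X-u)^+]\}$. For $\beta_t=(\lambda_t,\alpha_t)\in[0,1]\times(0,1)$, $\rho_{\beta_t}(X)=(1-\lambda_t)\mathbf E[X]+\lambda_t\mathrm{CVaR}_{\alpha_t}(X)$. A risk-aversion vector is $\beta=(\lambda_0,\alpha_0,\dots,\lambda_T,\alpha_T)$. Value functions. For $r\in\mathcal R$, $p\in\mathbb R$: $V_{T,T}(r,p\,|\,\beta)=\rho_{\beta_T}\big[\big(1+\gamma_h h(r)+\gamma_Y(pe^{-\kappa_Y}+\psi_{T+1,Y})\big)h(r)p_{\mathrm{ref}}\big]$, and for $t=T-1,\dots,0$: $\tilde V_{t,T}(r,p\,|\,\beta)=\rho_{\beta_t}\big[V_{t+1,T}(r,pe^{-\kappa_Y}+\psi_{t+1}\,|\,\beta)\big]$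 (post-decision value function) and $V_{t,T}(r,p\,|\,\beta)=\min_{x\in\mathcal X(r)}\{xp-c_f+\tilde V_{t,T}(r+x,p\,|\,\beta)\}$. *)

theory Defs
  imports "HOL-Probability.Probability"
begin

record ev_params =
  Hor   :: nat
  Rmx   :: real
  xmx   :: real
  R0    :: real                (* initial charge *)
  cf    :: real                (* access fee c_f *)
  pref  :: real
  gam_h :: real
  seas  :: "real \<Rightarrow> real"
  kapY  :: real
  muY   :: real
  sigY  :: real
  lamJ  :: real
  muJ   :: real
  sigJ  :: real
  gam_Y :: "real \<Rightarrow> real"     (* compensation function gamma_Y *)

definition params_ok :: "ev_params \<Rightarrow> bool" where
  "params_ok P \<longleftrightarrow> Hor P \<ge> 1 \<and> Rmx P > 0 \<and> xmx P > 0 \<and> 0 \<le> R0 P \<and> R0 P \<le> Rmx P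
     \<and> pref P > 0 \<and> gam_h P \<ge> 0 \<and> kapY P > 0 \<and> sigY P > 0
     \<and> 0 < lamJ P \<and> lamJ P < 1 \<and> sigJ P > 0 \<and> (\<forall>y. gam_Y P y > 0)"

definition xi_sd :: "ev_params \<Rightarrow> real" where
  "xi_sd P = sqrt (sigY P ^ 2 * (1 - exp (-2 * kapY P)) / (2 * kapY P))"

text \<open>Law of the innovation xi + X J, with xi ~ N(0, xi_sd^2), X ~ Bernoulli(lamJ),
  J ~ N(muJ, sigJ^2), mutually independent (product measure).\<close>
definition noise :: "ev_params \<Rightarrow> real measure" where
  "noise P = distr
     (density lborel (normal_density 0 (xi_sd P)) \<Otimes>\<^sub>M
        (measure_pmf (bernoulli_pmf (lamJ P)) \<Otimes>\<^sub>M density lborel (normal_density (muJ P) (sigJ P))))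
     borel (\<lambda>(a, b, j). a + (if b then j else 0))"

text \<open>Deterministic part of psi_{t+1}: psi_{t+1} = shift t + xi_{t+1} + X_{t+1} J_{t+1}.\<close>
definition shift :: "ev_params \<Rightarrow> nat \<Rightarrow> real" where
  "shift P t = seas P (real t + 1) - seas P (real t) * exp (- kapY P) + muY P * (1 - exp (- kapY P))"

definition Rset :: "ev_params \<Rightarrow> real set" where
  "Rset P = {0 .. Rmx P}"

definition Xset :: "ev_params \<Rightarrow> real \<Rightarrow> real set" where
  "Xset P r = {0 .. min (Rmx P - r) (xmx P)}"

definition shortage :: "ev_params \<Rightarrow> real \<Rightarrow> real" where
  "shortage P r = min (R0 P + real (Hor P) * xmx P) (Rmx P) - r"

definition CVaR :: "real \<Rightarrow> 'a measure \<Rightarrow> ('a \<Rightarrow> real) \<Rightarrow> real" where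
  "CVaR \<alpha> M f = (INF u. u + (1 / (1 - \<alpha>)) * (\<integral>z. max (f z - u) 0 \<partial>M))"

definition rho :: "real \<Rightarrow> real \<Rightarrow> 'a measure \<Rightarrow> ('a \<Rightarrow> real) \<Rightarrow> real" where
  "rho lam \<alpha> M f = (1 - lam) * (\<integral>z. f z \<partial>M) + lam * CVaR \<alpha> M f"

definition term_cost :: "ev_params \<Rightarrow> real \<Rightarrow> real \<Rightarrow> real" where
  "term_cost P r y = (1 + gam_h P * shortage P r + gam_Y P y) * shortage P r * pref P"

text \<open>V_{T,T}; Y_{T+1} = p e^{-kappa} + psi_{T+1} - g(T+1).
  The risk aversion vector beta is given by lb t = lambda_t and ab t = alpha_t.\<close>
definition VTT :: "ev_params \<Rightarrow> (nat \<Rightarrow> real) \<Rightarrow> (nat \<Rightarrow> real) \<Rightarrow> real \<Rightarrow> real \<Rightarrow> real" where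
  "VTT P lb ab r p = rho (lb (Hor P)) (ab (Hor P)) (noise P)
     (\<lambda>z. term_cost P r (p * exp (- kapY P) + shift P (Hor P) + z - seas P (real (Hor P) + 1)))"

text \<open>Backward recursion indexed by the number n = T - t of remaining steps.\<close>
primrec Wv :: "ev_params \<Rightarrow> (nat \<Rightarrow> real) \<Rightarrow> (nat \<Rightarrow> real) \<Rightarrow> nat \<Rightarrow> real \<Rightarrow> real \<Rightarrow> real" where
  "Wv P lb ab 0 r p = VTT P lb ab r p"
| "Wv P lb ab (Suc n) r p =
     (let t = Hor P - Suc n in
      INF x \<in> Xset P r. x * p - cf P
        + rho (lb t) (ab t) (noise P) (\<lambda>z. Wv P lb ab n (r + x) (p * exp (- kapY P) + shift P t + z)))"

text \<open>Value function V_{t,T} (meaningful for t \<le> T).\<close>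
definition V :: "ev_params \<Rightarrow> (nat \<Rightarrow> real) \<Rightarrow> (nat \<Rightarrow> real) \<Rightarrow> nat \<Rightarrow> real \<Rightarrow> real \<Rightarrow> real" where
  "V P lb ab t r p = Wv P lb ab (Hor P - t) r p"

text \<open>Post-decision value function tilde V_{t,T} (meaningful for t < T).\<close>
definition Vt :: "ev_params \<Rightarrow> (nat \<Rightarrow> real) \<Rightarrow> (nat \<Rightarrow> real) \<Rightarrow> nat \<Rightarrow> real \<Rightarrow> real \<Rightarrow> real" where
  "Vt P lb ab t r p = rho (lb t) (ab t) (noise P)
     (\<lambda>z. V P lb ab (Suc t) r (p * exp (- kapY P) + shift P t + z))"

end

theory Submission imports Defs begin

lemma inf_comb:
  fixes A :: "'a \<Rightarrow> real" and B :: "'b \<Rightarrow> real" and t c :: real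
  assumes "X1 \<noteq> {}" "X2 \<noteq> {}" "0 < t" "t < 1"
    and H: "\<And>a b. a \<in> X1 \<Longrightarrow> b \<in> X2 \<Longrightarrow> c \<le> (1-t) * A a + t * B b"
  shows "c \<le> (1-t) * (INF a\<in>X1. A a) + t * (INF b\<in>X2. B b)"
proof -
  have 1: "c \<le> (1-t) * (INF a\<in>X1. A a) + t * B b" if b: "b \<in> X2" for b
  proof -
    have "(c - t * B b) / (1-t) \<le> (INF a\<in>X1. A a)"
    proof (rule cINF_greatest[OF assms(1)])
      fix a assume "a \<in> X1"
      from H[OF this b] assms(4) show "(c - t * B b) / (1-t) \<le> A a"
        by (simp add: divide_simps) (simp add: algebra_simps)
    qed
    with assms(4) show ?thesis by (simp add: divide_simps) (simp add: algebra_simps)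
  qed
  have "(c - (1-t) * (INF a\<in>X1. A a)) / t \<le> (INF b\<in>X2. B b)"
  proof (rule cINF_greatest[OF assms(2)])
    fix b assume "b \<in> X2"
    from 1[OF this] assms(3) show "(c - (1-t) * (INF a\<in>X1. A a)) / t \<le> B b"
      by (simp add: divide_simps) (simp add: algebra_simps)
  qed
  with assms(3) show ?thesis by (simp add: divide_simps) (simp add: algebra_simps)
qed

lemma integ_pos:
  fixes f :: "'a \<Rightarrow> real" and u :: real
  assumes M: "prob_space M" and f: "integrable M f"
  shows "integrable M (\<lambda>z. max (f z - u) 0)"
proof -
  interpret prob_space M by fact
  show ?thesis using f by (intro integrable_max integrable_diff) auto
qed

lemma cvar_lower:
  fixes f :: "'a \<Rightarrow> real" and u :: real
  assumes M: "prob_space M" and f: "integrable M f" and a: "0 < \<alpha>" "\<alpha> < 1"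
  shows "(\<integral>z. f z \<partial>M) \<le> u + (1 / (1 - \<alpha>)) * (\<integral>z. max (f z - u) 0 \<partial>M)"
proof -
  interpret prob_space M by fact
  have i: "integrable M (\<lambda>z. f z - u)" using f by auto
  have I0: "0 \<le> (\<integral>z. max (f z - u) 0 \<partial>M)" by (intro Bochner_Integration.integral_nonneg) simp
  have "(\<integral>z. f z - u \<partial>M) \<le> (\<integral>z. max (f z - u) 0 \<partial>M)"
    by (rule integral_mono) (use i in auto)
  moreover have "(\<integral>z. f z - u \<partial>M) = (\<integral>z. f z \<partial>M) - u"
    using f by (simp add: prob_space)
  moreover have "1 \<le> 1 / (1 - \<alpha>)" using a by (simp add: divide_simps)
  ultimately have "(\<integral>z. max (f z - u) 0 \<partial>M) \<le> (1 / (1 - \<alpha>)) * (\<integral>z. max (f z - u) 0 \<partial>M)"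
     "(\<integral>z. f z \<partial>M) - u \<le> (\<integral>z. max (f z - u) 0 \<partial>M)"
    using I0 mult_right_mono[OF \<open>1 \<le> _\<close> I0] by auto
  then show ?thesis by linarith
qed

lemma cvar_comb:
  fixes f f1 f2 :: "'a \<Rightarrow> real" and t :: real
  assumes M: "prob_space M" and a: "0 < \<alpha>" "\<alpha> < 1" and t: "0 < t" "t < 1"
    and f: "integrable M f" and f1: "integrable M f1" and f2: "integrable M f2"
    and le: "\<And>z. f z \<le> (1-t) * f1 z + t * f2 z"
  shows "CVaR \<alpha> M f \<le> (1-t) * CVaR \<alpha> M f1 + t * CVaR \<alpha> M f2"
  unfolding CVaR_def
proof (rule inf_comb[OF _ _ t])
  fix u1 u2 :: real
  let ?c = "1 / (1 - \<alpha>)"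
  define u where "u = (1-t) * u1 + t * u2"
  have bdd: "bdd_below (range (\<lambda>u. u + ?c * (\<integral>z. max (f z - u) 0 \<partial>M)))"
    using cvar_lower[OF M f a] by (intro bdd_belowI2) blast
  have "(INF u. u + ?c * (\<integral>z. max (f z - u) 0 \<partial>M)) \<le> u + ?c * (\<integral>z. max (f z - u) 0 \<partial>M)"
    by (rule cINF_lower[OF bdd]) simp
  also have "(\<integral>z. max (f z - u) 0 \<partial>M) \<le> (\<integral>z. (1-t) * max (f1 z - u1) 0 + t * max (f2 z - u2) 0 \<partial>M)"
  proof (rule integral_mono)
    show "integrable M (\<lambda>z. max (f z - u) 0)" by (rule integ_pos[OF M f])
    show "integrable M (\<lambda>z. (1-t) * max (f1 z - u1) 0 + t * max (f2 z - u2) 0)"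
      using integ_pos[OF M f1] integ_pos[OF M f2] by auto
    fix z
    have "f z - u \<le> (1-t) * (f1 z - u1) + t * (f2 z - u2)" using le[of z] by (simp add: u_def algebra_simps)
    also have "\<dots> \<le> (1-t) * max (f1 z - u1) 0 + t * max (f2 z - u2) 0"
      using t by (intro add_mono mult_left_mono) auto
    finally show "max (f z - u) 0 \<le> (1-t) * max (f1 z - u1) 0 + t * max (f2 z - u2) 0"
      using t by auto
  qed
  hence "u + ?c * (\<integral>z. max (f z - u) 0 \<partial>M) \<le> u + ?c * (\<integral>z. (1-t) * max (f1 z - u1) 0 + t * max (f2 z - u2) 0 \<partial>M)"
    using a by (intro add_left_mono mult_left_mono) auto
  also have "\<dots> = (1-t) * (u1 + ?c * (\<integral>z. max (f1 z - u1) 0 \<partial>M)) + t * (u2 + ?c * (\<integral>z. max (f2 z - u2) 0 \<partial>M))"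
  proof -
    have i1: "integrable M (\<lambda>z. max (f1 z - u1) 0)" "integrable M (\<lambda>z. max (f2 z - u2) 0)"
      using integ_pos[OF M f1] integ_pos[OF M f2] by auto
    have e: "(\<integral>z. (1-t) * max (f1 z - u1) 0 + t * max (f2 z - u2) 0 \<partial>M) = (1-t) * (\<integral>z. max (f1 z - u1) 0 \<partial>M) + t * (\<integral>z. max (f2 z - u2) 0 \<partial>M)"
      using i1 by simp
    have gen: "\<And>c I1 I2. u + c*((1-t)*I1 + t*I2) = (1-t)*(u1 + c*I1) + t*(u2+c*I2)"
      by (simp add: u_def algebra_simps)
    show ?thesis unfolding e by (rule gen)
  qed
  finally show "(INF u. u + ?c * (\<integral>z. max (f z - u) 0 \<partial>M)) \<le> (1-t) * (u1 + ?c * (\<integral>z. max (f1 z - u1) 0 \<partial>M)) + t * (u2 + ?c * (\<integral>z. max (f2 z - u2) 0 \<partial>M))" .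
qed auto

lemma rho_convex:
  fixes F :: "real \<Rightarrow> 'a \<Rightarrow> real"
  assumes M: "prob_space M" and l: "0 \<le> lam" "lam \<le> 1" and a: "0 < \<alpha>" "\<alpha> < 1"
    and S: "convex S" and I: "\<And>r. r \<in> S \<Longrightarrow> integrable M (F r)"
    and C: "\<And>z. convex_on S (\<lambda>r. F r z)"
  shows "convex_on S (\<lambda>r. rho lam \<alpha> M (F r))"
proof (rule convex_onI[OF _ S])
  fix t x y :: real assume t: "0 < t" "t < 1" and xy: "x \<in> S" "y \<in> S"
  let ?r = "(1 - t) *\<^sub>R x + t *\<^sub>R y"
  have rS: "?r \<in> S" using S xy t by (simp add: convex_def)
  have le: "F ?r z \<le> (1-t) * F x z + t * F y z" for z
    using convex_onD[OF C[of z], of t x y] t xy by auto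
  have E: "(\<integral>z. F ?r z \<partial>M) \<le> (1-t) * (\<integral>z. F x z \<partial>M) + t * (\<integral>z. F y z \<partial>M)"
  proof -
    have "(\<integral>z. F ?r z \<partial>M) \<le> (\<integral>z. (1-t) * F x z + t * F y z \<partial>M)"
      using le I[OF rS] I[OF xy(1)] I[OF xy(2)] by (intro integral_mono) auto
    also have "\<dots> = (1-t) * (\<integral>z. F x z \<partial>M) + t * (\<integral>z. F y z \<partial>M)"
      using I[OF xy(1)] I[OF xy(2)] by simp
    finally show ?thesis .
  qed
  have Cv: "CVaR \<alpha> M (F ?r) \<le> (1-t) * CVaR \<alpha> M (F x) + t * CVaR \<alpha> M (F y)"
    by (rule cvar_comb[OF M a t I[OF rS] I[OF xy(1)] I[OF xy(2)] le])
  have "rho lam \<alpha> M (F ?r) \<le> (1 - lam) * ((1-t) * (\<integral>z. F x z \<partial>M) + t * (\<integral>z. F y z \<partial>M))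
     + lam * ((1-t) * CVaR \<alpha> M (F x) + t * CVaR \<alpha> M (F y))"
    unfolding rho_def using l E Cv by (intro add_mono mult_left_mono) auto
  also have "\<dots> = (1 - t) * rho lam \<alpha> M (F x) + t * rho lam \<alpha> M (F y)"
    unfolding rho_def by (simp add: algebra_simps)
  finally show "rho lam \<alpha> M (F ?r) \<le> (1 - t) * rho lam \<alpha> M (F x) + t * rho lam \<alpha> M (F y)" .
qed

lemma xi_pos: assumes "params_ok P" shows "0 < xi_sd P"
proof -
  have k: "kapY P > 0" "sigY P > 0" using assms by (auto simp: params_ok_def)
  have "exp (-2 * kapY P) < 1" using k by simp
  then show ?thesis unfolding xi_sd_def using k by (intro real_sqrt_gt_zero divide_pos_pos mult_pos_pos) auto
qed

lemma noise_prob: assumes "params_ok P" shows "prob_space (noise P)"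
  unfolding noise_def
  apply (rule prob_space.prob_space_distr)
   apply (intro prob_space_pair prob_space_measure_pmf prob_space_normal_density xi_pos assms)
  using assms apply (simp add: params_ok_def)
  apply (simp add: split_beta)
  apply measurable
  done

lemma convex_bdd:
  fixes f :: "real \<Rightarrow> real"
  assumes C: "convex_on {a..b} f" and ab: "a \<le> b"
  shows "bdd_below (f ` {a..b})"
proof (rule bdd_belowI2)
  fix x assume x: "x \<in> {a..b}"
  define x' where "x' = a + b - x"
  have x': "x' \<in> {a..b}" using x by (auto simp: x'_def)
  have e: "(1 - 1/2) *\<^sub>R x + (1/2) *\<^sub>R x' = (a+b)/2" by (simp add: x'_def field_simps)
  have A: "f ((a+b)/2) \<le> (1 - 1/2) * f x + (1/2) * f x'"
    using convex_onD[OF C, of "1/2" x x'] x x' unfolding e by simp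
  moreover have "f x' \<le> max (f a) (f b)"
  proof -
    have 1: "f x' \<le> (f b - f a) / (b - a) * (x' - a) + f a"
      by (rule convex_onD_Icc'[OF C x'])
    show ?thesis
    proof (cases "a = b")
      case True then show ?thesis using 1 by simp
    next
      case False
      then have d: "b - a > 0" using ab by simp
      define s where "s = (x' - a) / (b - a)"
      have s: "0 \<le> s" "s \<le> 1" using x' d by (auto simp: s_def divide_simps)
      have "(f b - f a) / (b - a) * (x' - a) + f a = (1 - s) * f a + s * f b"
      proof -
        have "(f b - f a) / (b - a) * (x' - a) = s * (f b - f a)" by (simp add: s_def)
        then show ?thesis by (simp add: algebra_simps)
      qed
      also have "\<dots> \<le> (1 - s) * max (f a) (f b) + s * max (f a) (f b)"
        using s by (intro add_mono mult_left_mono) auto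
      finally show ?thesis using 1 by (simp add: algebra_simps)
    qed
  qed
  ultimately show "2 * f ((a+b)/2) - max (f a) (f b) \<le> f x" using A by (simp add: field_simps)
qed

lemma term_cost_convex:
  assumes "params_ok P"
  shows "convex_on (Rset P) (\<lambda>r. term_cost P r y)"
proof (rule convex_onI)
  show "convex (Rset P)" by (simp add: Rset_def convex_real_interval)
  fix t x1 x2 :: real assume t: "0 < t" "t < 1"
  have g: "gam_h P \<ge> 0" "pref P > 0" using assms by (auto simp: params_ok_def)
  define c where "c = min (R0 P + real (Hor P) * xmx P) (Rmx P)"
  define h1 where "h1 = c - x1"
  define h2 where "h2 = c - x2"
  have sh: "shortage P ((1 - t) *\<^sub>R x1 + t *\<^sub>R x2) = (1-t)*h1 + t*h2"
    "shortage P x1 = h1" "shortage P x2 = h2"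
    by (simp_all add: shortage_def c_def h1_def h2_def algebra_simps)
  have sq: "((1-t)*h1 + t*h2)^2 \<le> (1-t)*h1^2 + t*h2^2"
  proof -
    have "(1-t)*h1^2 + t*h2^2 - ((1-t)*h1 + t*h2)^2 = t*(1-t)*(h1-h2)^2"
      by (simp add: power2_eq_square algebra_simps)
    moreover have "t*(1-t)*(h1-h2)^2 \<ge> 0" using t by simp
    ultimately show ?thesis by linarith
  qed
  have "gam_h P * pref P * ((1-t)*h1 + t*h2)^2 \<le> gam_h P * pref P * ((1-t)*h1^2 + t*h2^2)"
    using g sq by (intro mult_left_mono) auto
  then show "term_cost P ((1 - t) *\<^sub>R x1 + t *\<^sub>R x2) y \<le> (1 - t) * term_cost P x1 y + t * term_cost P x2 y"
    unfolding term_cost_def sh by (simp add: power2_eq_square algebra_simps)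
qed

lemma Rset_convex: "convex (Rset P)" by (simp add: Rset_def convex_real_interval)
lemma Xset_convex: "convex (Xset P r)" by (simp add: Xset_def convex_real_interval)

lemma Wv_step:
  assumes ok: "params_ok P"
    and l: "0 \<le> lb tt" "lb tt \<le> 1" "0 < ab tt" "ab tt < 1"
    and tt: "tt = Hor P - Suc n"
    and I: "\<And>s q. s \<in> Rset P \<Longrightarrow> integrable (noise P) (\<lambda>z. Wv P lb ab n s (q * exp (- kapY P) + shift P tt + z))"
    and C: "\<And>q. convex_on (Rset P) (\<lambda>r. Wv P lb ab n r q)"
  shows "convex_on (Rset P) (\<lambda>r. Wv P lb ab (Suc n) r p)"
proof -
  define H where "H s = rho (lb tt) (ab tt) (noise P) (\<lambda>z. Wv P lb ab n s (p * exp (- kapY P) + shift P tt + z))" for s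
  have HC: "convex_on (Rset P) H"
    unfolding H_def
    by (rule rho_convex[OF noise_prob[OF ok] l Rset_convex I]) (use C in auto)
  define phi where "phi r x = x * p - cf P + H (r + x)" for r x
  have W: "Wv P lb ab (Suc n) r p = (INF x\<in>Xset P r. phi r x)" for r
    by (simp add: phi_def H_def Let_def tt)
  have pos: "Rmx P > 0" "xmx P > 0" using ok by (auto simp: params_ok_def)
  have Xm: "x \<in> Xset P r \<longleftrightarrow> 0 \<le> x \<and> x \<le> Rmx P - r \<and> x \<le> xmx P" for x r
    by (auto simp: Xset_def)
  have Rm: "r \<in> Rset P \<longleftrightarrow> 0 \<le> r \<and> r \<le> Rmx P" for r by (auto simp: Rset_def)
  have ne: "Xset P r \<noteq> {}" if "r \<in> Rset P" for r
  proof -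
    have "0 \<in> Xset P r" using that pos by (simp add: Xm Rm)
    then show ?thesis by blast
  qed
  have phiC: "convex_on (Xset P r) (phi r)" if r: "r \<in> Rset P" for r
  proof (rule convex_onI[OF _ Xset_convex])
    fix t x1 x2 :: real assume t: "0 < t" "t < 1" and x: "x1 \<in> Xset P r" "x2 \<in> Xset P r"
    have m: "r + x1 \<in> Rset P" "r + x2 \<in> Rset P" using x r by (auto simp: Xm Rm)
    have e: "r + ((1 - t) *\<^sub>R x1 + t *\<^sub>R x2) = (1 - t) *\<^sub>R (r + x1) + t *\<^sub>R (r + x2)"
      by (simp add: algebra_simps)
    have "H (r + ((1 - t) *\<^sub>R x1 + t *\<^sub>R x2)) \<le> (1 - t) * H (r + x1) + t * H (r + x2)"
      unfolding e by (rule convex_onD[OF HC]) (use t m in auto)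
    then show "phi r ((1 - t) *\<^sub>R x1 + t *\<^sub>R x2) \<le> (1 - t) * phi r x1 + t * phi r x2"
      by (simp add: phi_def algebra_simps)
  qed
  have bdd: "bdd_below (phi r ` Xset P r)" if r: "r \<in> Rset P" for r
  proof -
    have "Xset P r = {0 .. min (Rmx P - r) (xmx P)}" by (simp add: Xset_def)
    moreover have "0 \<le> min (Rmx P - r) (xmx P)" using r pos by (auto simp: Rm)
    ultimately show ?thesis using convex_bdd[of 0 "min (Rmx P - r) (xmx P)" "phi r"] phiC[OF r] by simp
  qed
  show ?thesis
  proof (rule convex_onI[OF _ Rset_convex])
    fix t r1 r2 :: real assume t: "0 < t" "t < 1" and r: "r1 \<in> Rset P" "r2 \<in> Rset P"
    define r where "r = (1 - t) * r1 + t * r2"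
    have rR: "r \<in> Rset P" using convex_onD[OF _] Rset_convex r t
      unfolding r_def by (auto simp: Rm intro: convex_bound_le) 
    show "Wv P lb ab (Suc n) ((1 - t) *\<^sub>R r1 + t *\<^sub>R r2) p
        \<le> (1 - t) * Wv P lb ab (Suc n) r1 p + t * Wv P lb ab (Suc n) r2 p"
      unfolding W
    proof (rule inf_comb[OF ne[OF r(1)] ne[OF r(2)] t])
      fix x1 x2 assume x: "x1 \<in> Xset P r1" "x2 \<in> Xset P r2"
      define x where "x = (1 - t) * x1 + t * x2"
      have a1: "(1-t) * x1 \<le> (1-t) * (Rmx P - r1)" "t * x2 \<le> t * (Rmx P - r2)"
        "(1-t) * x1 \<le> (1-t) * xmx P" "t * x2 \<le> t * xmx P"
        "0 \<le> (1-t) * x1" "0 \<le> t * x2"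
        using x t by (auto simp: Xm intro!: mult_left_mono)
      have "(1-t) * (Rmx P - r1) + t * (Rmx P - r2) = Rmx P - r" "(1-t) * xmx P + t * xmx P = xmx P"
        by (simp_all add: r_def algebra_simps)
      then have xX: "x \<in> Xset P r" using a1 by (auto simp: Xm x_def)
      have m: "r1 + x1 \<in> Rset P" "r2 + x2 \<in> Rset P" using x r by (auto simp: Xm Rm)
      have e: "r + x = (1 - t) *\<^sub>R (r1 + x1) + t *\<^sub>R (r2 + x2)"
        by (simp add: r_def x_def algebra_simps)
      have "H (r + x) \<le> (1 - t) * H (r1 + x1) + t * H (r2 + x2)"
        unfolding e by (rule convex_onD[OF HC]) (use t m in auto)
      then have "phi r x \<le> (1 - t) * phi r1 x1 + t * phi r2 x2"
        by (simp add: phi_def x_def algebra_simps)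
      moreover have "(INF x\<in>Xset P r. phi r x) \<le> phi r x"
        by (rule cINF_lower[OF bdd[OF rR] xX])
      ultimately show "(INF x\<in>Xset P ((1 - t) *\<^sub>R r1 + t *\<^sub>R r2). phi ((1 - t) *\<^sub>R r1 + t *\<^sub>R r2) x)
          \<le> (1 - t) * phi r1 x1 + t * phi r2 x2"
        by (simp add: r_def)
    qed
  qed
qed

theorem proposition1:
  fixes P :: ev_params and lb ab :: "nat \<Rightarrow> real" and p :: real
  assumes params: "params_ok P"
    and risk: "\<forall>t \<le> Hor P. 0 \<le> lb t \<and> lb t \<le> 1 \<and> 0 < ab t \<and> ab t < 1"
    and wellposed_T: "\<forall>r \<in> Rset P. \<forall>q. integrable (noise P)
        (\<lambda>z. term_cost P r (q * exp (- kapY P) + shift P (Hor P) + z - seas P (real (Hor P) + 1)))"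
    and wellposed: "\<forall>t < Hor P. \<forall>r \<in> Rset P. \<forall>q. integrable (noise P)
        (\<lambda>z. V P lb ab (Suc t) r (q * exp (- kapY P) + shift P t + z))"
  shows "(\<forall>t < Hor P.
            (\<forall>r \<in> Rset P. convex_on (Xset P r) (\<lambda>x. x * p + Vt P lb ab t (r + x) p))
          \<and> convex_on (Rset P) (\<lambda>r. Vt P lb ab t r p)
          \<and> convex_on (Rset P) (\<lambda>r. V P lb ab t r p))
       \<and> convex_on (Rset P) (\<lambda>r. V P lb ab (Hor P) r p)"
proof -
  have M: "prob_space (noise P)" by (rule noise_prob[OF params])
  have WC: "\<forall>q. convex_on (Rset P) (\<lambda>r. Wv P lb ab n r q)" if "n \<le> Hor P" for n
    using that
  proof (induction n)
    case 0
    have l: "0 \<le> lb (Hor P)" "lb (Hor P) \<le> 1" "0 < ab (Hor P)" "ab (Hor P) < 1" using risk by auto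
    show ?case
    proof
      fix q
      show "convex_on (Rset P) (\<lambda>r. Wv P lb ab 0 r q)"
        unfolding Wv.simps VTT_def
        by (rule rho_convex[OF M l Rset_convex]) (use wellposed_T term_cost_convex[OF params] in auto)
    qed
  next
    case (Suc n)
    define tt where "tt = Hor P - Suc n"
    have tl: "tt < Hor P" "tt \<le> Hor P" using Suc.prems by (auto simp: tt_def)
    have l: "0 \<le> lb tt" "lb tt \<le> 1" "0 < ab tt" "ab tt < 1" using risk tl by auto
    have hn: "Hor P - Suc tt = n" using Suc.prems by (simp add: tt_def)
    show ?case
    proof
      fix q
      show "convex_on (Rset P) (\<lambda>r. Wv P lb ab (Suc n) r q)"
      proof (rule Wv_step[where lb=lb and ab=ab and tt=tt and n=n, OF params l tt_def])
        fix s q' assume "s \<in> Rset P"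
        then show "integrable (noise P) (\<lambda>z. Wv P lb ab n s (q' * exp (- kapY P) + shift P tt + z))"
          using wellposed tl(1) by (auto simp: V_def hn)
      next
        fix q' show "convex_on (Rset P) (\<lambda>r. Wv P lb ab n r q')" using Suc by auto
      qed
    qed
  qed
  have VtC: "convex_on (Rset P) (\<lambda>r. Vt P lb ab t r p)" if t: "t < Hor P" for t
  proof -
    have l: "0 \<le> lb t" "lb t \<le> 1" "0 < ab t" "ab t < 1" using risk t by auto
    show ?thesis unfolding Vt_def
      by (rule rho_convex[OF M l Rset_convex]) (use wellposed t WC[of "Hor P - Suc t"] in \<open>auto simp: V_def\<close>)
  qed
  have part1: "convex_on (Xset P r) (\<lambda>x. x * p + Vt P lb ab t (r + x) p)"
    if t: "t < Hor P" and r: "r \<in> Rset P" for t r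
  proof (rule convex_onI[OF _ Xset_convex])
    fix s x1 x2 :: real assume s: "0 < s" "s < 1" and x: "x1 \<in> Xset P r" "x2 \<in> Xset P r"
    have m: "r + x1 \<in> Rset P" "r + x2 \<in> Rset P" using x r by (auto simp: Xset_def Rset_def)
    have e: "r + ((1 - s) *\<^sub>R x1 + s *\<^sub>R x2) = (1 - s) *\<^sub>R (r + x1) + s *\<^sub>R (r + x2)"
      by (simp add: algebra_simps)
    have "Vt P lb ab t (r + ((1 - s) *\<^sub>R x1 + s *\<^sub>R x2)) p \<le> (1 - s) * Vt P lb ab t (r + x1) p + s * Vt P lb ab t (r + x2) p"
      unfolding e by (rule convex_onD[OF VtC[OF t]]) (use s m in auto)
    then show "((1 - s) *\<^sub>R x1 + s *\<^sub>R x2) * p + Vt P lb ab t (r + ((1 - s) *\<^sub>R x1 + s *\<^sub>R x2)) p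
        \<le> (1 - s) * (x1 * p + Vt P lb ab t (r + x1) p) + s * (x2 * p + Vt P lb ab t (r + x2) p)"
      by (simp add: algebra_simps)
  qed
  show ?thesis
  proof (intro conjI allI impI ballI)
    fix t r assume "t < Hor P" "r \<in> Rset P"
    then show "convex_on (Xset P r) (\<lambda>x. x * p + Vt P lb ab t (r + x) p)" by (rule part1)
  next
    fix t assume "t < Hor P"
    then show "convex_on (Rset P) (\<lambda>r. Vt P lb ab t r p)" by (rule VtC)
  next
    fix t assume "t < Hor P"
    then show "convex_on (Rset P) (\<lambda>r. V P lb ab t r p)" unfolding V_def using WC[of "Hor P - t"] by auto
  next
    show "convex_on (Rset P) (\<lambda>r. V P lb ab (Hor P) r p)" unfolding V_def using WC[of 0] by auto
  qed
qed

end
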